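(* Let $T\in\mathbb{T}$. Then no non-pendant edge of $T$ belongs to a maximum matching of $T$.
   Context: $\mathbb{T}$ is the class of simple undirected weighted trees $T$ (nonzero real weights on edges) such that (i) $T$ has at least one non-pendant vertex, and (ii) every non-pendant vertex of $T$ is adjacent to at least one pendant vertex. A pendant vertex is a vertex of degree one; a pendant edge is an edge incident to a pendant vertex; a non-pendant edge is any other edge. A maximum matching is a set of pairwise vertex-disjoint edges of maximum cardinality. *)

theory Defs
  imports Complex_Main
begin

definition simple_graph :: "'a set \<Rightarrow> 'a set set \<Rightarrow> bool" where
  "simple_graph V E \<longleftrightarrow> finite V \<and> (\<forall>e\<in>E. \<exists>u v. e = {u, v} \<and> u \<in> V \<and> v \<in> V \<and> u \<noteq> v)"

definition adj :: "'a set set \<Rightarrow> 'a \<Rightarrow> 'a \<Rightarrow> bool" where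
  "adj E u v \<longleftrightarrow> u \<noteq> v \<and> {u, v} \<in> E"

definition connected_graph :: "'a set \<Rightarrow> 'a set set \<Rightarrow> bool" where
  "connected_graph V E \<longleftrightarrow> (\<forall>u\<in>V. \<forall>v\<in>V. (adj E)\<^sup>*\<^sup>* u v)"

definition is_cycle :: "'a set set \<Rightarrow> 'a list \<Rightarrow> bool" where
  "is_cycle E xs \<longleftrightarrow> length xs \<ge> 3 \<and> distinct xs
     \<and> (\<forall>i. Suc i < length xs \<longrightarrow> adj E (xs ! i) (xs ! Suc i))
     \<and> adj E (last xs) (hd xs)"

definition is_tree :: "'a set \<Rightarrow> 'a set set \<Rightarrow> bool" where
  "is_tree V E \<longleftrightarrow> simple_graph V E \<and> V \<noteq> {} \<and> connected_graph V E \<and> (\<nexists>xs. is_cycle E xs)"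

definition degree :: "'a set set \<Rightarrow> 'a \<Rightarrow> nat" where
  "degree E v = card {e \<in> E. v \<in> e}"

definition pendant :: "'a set set \<Rightarrow> 'a \<Rightarrow> bool" where
  "pendant E v \<longleftrightarrow> degree E v = 1"

definition pendant_edge :: "'a set set \<Rightarrow> 'a set \<Rightarrow> bool" where
  "pendant_edge E e \<longleftrightarrow> e \<in> E \<and> (\<exists>v\<in>e. pendant E v)"

definition matching :: "'a set set \<Rightarrow> 'a set set \<Rightarrow> bool" where
  "matching E M \<longleftrightarrow> M \<subseteq> E \<and> (\<forall>e1\<in>M. \<forall>e2\<in>M. e1 \<noteq> e2 \<longrightarrow> e1 \<inter> e2 = {})"

definition maximum_matching :: "'a set set \<Rightarrow> 'a set set \<Rightarrow> bool" where
  "maximum_matching E M \<longleftrightarrow> matching E M \<and> (\<forall>M'. matching E M' \<longrightarrow> card M' \<le> card M)"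

definition classT :: "'a set \<Rightarrow> 'a set set \<Rightarrow> ('a set \<Rightarrow> real) \<Rightarrow> bool" where
  "classT V E w \<longleftrightarrow> is_tree V E \<and> (\<forall>e\<in>E. w e \<noteq> 0)
     \<and> (\<exists>v\<in>V. \<not> pendant E v)
     \<and> (\<forall>v\<in>V. \<not> pendant E v \<longrightarrow> (\<exists>u\<in>V. adj E v u \<and> pendant E u))"

end

theory Submission
  imports Defs
begin

lemma pendant_unique:
  assumes "pendant E x" "{x, a} \<in> E" "{x, b} \<in> E"
  shows "{x, a} = {x, b}"
proof -
  have "card {e \<in> E. x \<in> e} = 1" using assms(1) by (simp add: pendant_def degree_def)
  then obtain f where f: "{e \<in> E. x \<in> e} = {f}" by (auto simp: card_Suc_eq)
  have "{x,a} \<in> {e \<in> E. x \<in> e}" "{x,b} \<in> {e \<in> E. x \<in> e}" using assms by auto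
  then show ?thesis using f by auto
qed

theorem theorem3p3:
  fixes V :: "'a set" and E :: "'a set set" and w :: "'a set \<Rightarrow> real"
  assumes "classT V E w"
    and "e \<in> E" and "\<not> pendant_edge E e"
    and "maximum_matching E M"
  shows "e \<notin> M"
proof
  assume eM: "e \<in> M"
  have sg: "simple_graph V E" and fV: "finite V"
    and nb: "\<forall>v\<in>V. \<not> pendant E v \<longrightarrow> (\<exists>u\<in>V. adj E v u \<and> pendant E u)"
    using assms(1) by (auto simp: classT_def is_tree_def simple_graph_def)
  obtain u v where e: "e = {u,v}" "u \<in> V" "v \<in> V" "u \<noteq> v"
    using sg assms(2) by (auto simp: simple_graph_def)
  have nu: "\<not> pendant E u" and nv: "\<not> pendant E v" using assms(2,3) e by (auto simp: pendant_edge_def)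
  obtain u' where u': "adj E u u'" "pendant E u'" using nb nu e by blast
  obtain v' where v': "adj E v v'" "pendant E v'" using nb nv e by blast
  have uu: "{u', u} \<in> E" "u \<noteq> u'" using u' by (auto simp: adj_def insert_commute)
  have vv: "{v', v} \<in> E" "v \<noteq> v'" using v' by (auto simp: adj_def insert_commute)
  have "u' \<noteq> v" using u' nv by auto
  have "v' \<noteq> u" using v' nu by auto
  have "u' \<noteq> v'"
  proof
    assume "u' = v'"
    then have "{u', u} = {u', v}" using pendant_unique[OF u'(2) uu(1)] vv by simp
    then show False using \<open>u \<noteq> v\<close> \<open>u \<noteq> u'\<close> by (auto simp: doubleton_eq_iff)
  qed
  have mM: "matching E M" and mx: "\<And>M'. matching E M' \<Longrightarrow> card M' \<le> card M"
    using assms(4) by (auto simp: maximum_matching_def)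
  have fE: "finite E"
  proof -
    have "E \<subseteq> Pow V" using sg by (auto simp: simple_graph_def)
    then show ?thesis using fV finite_subset by blast
  qed
  have fM: "finite M" using mM fE by (auto simp: matching_def intro: finite_subset)
  have noU: "\<And>f. f \<in> M \<Longrightarrow> u' \<in> f \<Longrightarrow> False"
  proof -
    fix f assume f: "f \<in> M" "u' \<in> f"
    then have fE': "f \<in> E" using mM by (auto simp: matching_def)
    then obtain a b where ab: "f = {a,b}" using sg by (auto simp: simple_graph_def)
    obtain c where c: "f = {u', c}" using f(2) ab by blast
    have "f = {u', u}"
      using c pendant_unique[OF u'(2) uu(1), of c] fE' by simp
    then have "f \<noteq> e" "u \<in> f \<inter> e" using e \<open>u' \<noteq> v\<close> \<open>u \<noteq> u'\<close> by (auto simp: doubleton_eq_iff)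
    then show False using mM f eM by (auto simp: matching_def)
  qed
  have noV: "\<And>f. f \<in> M \<Longrightarrow> v' \<in> f \<Longrightarrow> False"
  proof -
    fix f assume f: "f \<in> M" "v' \<in> f"
    then have fE': "f \<in> E" using mM by (auto simp: matching_def)
    then obtain a b where ab: "f = {a,b}" using sg by (auto simp: simple_graph_def)
    obtain c where c: "f = {v', c}" using f(2) ab by blast
    have "f = {v', v}"
      using c pendant_unique[OF v'(2) vv(1), of c] fE' by simp
    then have "f \<noteq> e" "v \<in> f \<inter> e" using e \<open>v' \<noteq> u\<close> \<open>v \<noteq> v'\<close> by (auto simp: doubleton_eq_iff)
    then show False using mM f eM by (auto simp: matching_def)
  qed
  have noe: "\<And>f. f \<in> M \<Longrightarrow> f \<noteq> e \<Longrightarrow> u \<notin> f \<and> v \<notin> f"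
  proof -
    fix f assume "f \<in> M" "f \<noteq> e"
    then have "f \<inter> e = {}" using mM eM by (auto simp: matching_def)
    then show "u \<notin> f \<and> v \<notin> f" using e by auto
  qed
  define M' where "M' = insert {u',u} (insert {v',v} (M - {e}))"
  have "matching E M'"
    unfolding matching_def M'_def
    using mM uu vv noU noV noe \<open>u' \<noteq> v\<close> \<open>v' \<noteq> u\<close> \<open>u' \<noteq> v'\<close> \<open>u \<noteq> v\<close>
    by (auto simp: matching_def)
  moreover have "card M' = card M + 1"
  proof -
    have n1: "{v',v} \<notin> M - {e}" using noV by auto
    have n2: "{u',u} \<notin> insert {v',v} (M - {e})" using noU \<open>u' \<noteq> v'\<close> \<open>u' \<noteq> v\<close> by (auto simp: doubleton_eq_iff)
    have "card M' = card (M - {e}) + 2" unfolding M'_def using n1 n2 fM by simp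
    then show ?thesis using eM fM by (simp add: card_Diff_singleton) (metis One_nat_def Suc_pred card_gt_0_iff empty_iff)
  qed
  ultimately show False using mx by fastforce
qed

end
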